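(* Consider a Markov decision process with continuous state space $\mathcal{S}$, continuous action space $\mathcal{A}$, transition density $p(\mathbf{s}'|\mathbf{s},\mathbf{a})$ and discount factor $\gamma\in(0,1)$, and let $r_1,r_2$ be bounded reward functions with optimal soft Q-functions (temperature $1$) $Q_1^*, Q_2^*$ and optimal soft policies $\pi_i^*(\mathbf{a}|\mathbf{s})\propto\exp(Q_i^*(\mathbf{s},\mathbf{a}))$. Let $Q_\Sigma=\frac12(Q_1^*+Q_2^* )$, $r_\mathcal{C}=\frac12(r_1+r_2)$, let $Q_\mathcal{C}^*$ be the optimal soft Q-function for $r_\mathcal{C}$, and let $\pi_\Sigma(\mathbf{a}|\mathbf{s}) \propto \exp(Q_\Sigma(\mathbf{s},\mathbf{a}))$ be the composed policy. Let $C^*$ be the fixed point of $$C(\mathbf{s},\mathbf{a}) \leftarrow \gamma\, \mathbb{E}_{\mathbf{s}'\sim p(\mathbf{s}'|\mathbf{s},\mathbf{a})}\Big[ D_{1/2}\big(\pi_1^*(\cdot|\mathbf{s}')\,\|\,\pi_2^*(\cdot|\mathbf{s}')\big) + \max_{\mathbf{a}'\in\mathcal{A}} C(\mathbf{s}',\mathbf{a}')\Big],$$ and let $D^*$ be the fixed point of $$D(\mathbf{s},\mathbf{a}) \leftarrow \gamma\,\mathbb{E}_{\mathbf{s}'\sim p(\mathbf{s}'|\mathbf{s},\mathbf{a})}\Big[\mathbb{E}_{\mathbf{a}'\sim\pi_\Sigma(\mathbf{a}'|\mathbf{s}')}\big[C^*(\mathbf{s}',\mathbf{a}') + D(\mathbf{s}',\mathbf{a}')\big]\Big].$$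 Then the soft Q-function $Q_\mathcal{C}^{\pi_\Sigma}$ of the policy $\pi_\Sigma$ for the reward $r_\mathcal{C}$ satisfies, for all $\mathbf{s}\in\mathcal{S}$, $\mathbf{a}\in\mathcal{A}$, $$Q_\mathcal{C}^{\pi_\Sigma}(\mathbf{s},\mathbf{a}) \ge Q_\mathcal{C}^*(\mathbf{s},\mathbf{a}) - D^*(\mathbf{s},\mathbf{a}).$$
   Context: Soft (maximum-entropy) reinforcement learning with temperature $1$: for a bounded reward $r$, the soft Bellman backup maps a bounded $Q$ to $r(\mathbf{s},\mathbf{a}) + \gamma\,\mathbb{E}_{\mathbf{s}'\sim p(\cdot|\mathbf{s},\mathbf{a})}[\log\int_{\mathcal{A}}\exp(Q(\mathbf{s}',\mathbf{a}'))\,d\mathbf{a}']$; the optimal soft Q-function for $r$ is its unique fixed point, and the optimal soft policy is proportional to $\exp$ of it. For a policy $\pi$, its soft Q-function $Q^\pi$ for reward $r$ is the fixed point of the soft policy evaluation operator $Q(\mathbf{s},\mathbf{a}) \leftarrow r(\mathbf{s},\mathbf{a}) + \gamma\,\mathbb{E}_{\mathbf{s}'\sim p(\cdot|\mathbf{s},\mathbf{a})}\big[\mathbb{E}_{\mathbf{a}'\sim\pi(\cdot|\mathbf{s}')}[Q(\mathbf{s}',\mathbf{a}') - \log\pi(\mathbf{a}'|\mathbf{s}')]\big]$. $D_{1/2}(p\|q) = -2\log\int\sqrt{p q}$ is the Rényi divergence of order $1/2$. *)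

theory Defs
  imports "HOL-Analysis.Analysis"
begin

text \<open>States live in a measure space Ms (reference measure for the
transition density), actions in a measure space Ma (reference measure d a,
e.g. Lebesgue measure on a bounded action set). A "Q-like" function is a
curried function 's => 'a => real; policies are densities w.r.t. Ma.\<close>

definition soft_mdp ::
  "'s measure \<Rightarrow> 'a measure \<Rightarrow> ('s \<Rightarrow> 'a \<Rightarrow> 's \<Rightarrow> real) \<Rightarrow> real \<Rightarrow> bool" where
  "soft_mdp Ms Ma p \<gamma> \<longleftrightarrow>
     sigma_finite_measure Ms \<and>
     0 < emeasure Ma (space Ma) \<and> emeasure Ma (space Ma) < \<infinity> \<and>
     0 < \<gamma> \<and> \<gamma> < 1 \<and>
     (\<lambda>((s, a), s'). p s a s') \<in> borel_measurable ((Ms \<Otimes>\<^sub>M Ma) \<Otimes>\<^sub>M Ms) \<and>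
     (\<forall>s\<in>space Ms. \<forall>a\<in>space Ma. \<forall>s'\<in>space Ms. 0 \<le> p s a s') \<and>
     (\<forall>s\<in>space Ms. \<forall>a\<in>space Ma. (\<integral>s'. p s a s' \<partial>Ms) = 1)"

definition bounded_measurable_SA ::
  "'s measure \<Rightarrow> 'a measure \<Rightarrow> ('s \<Rightarrow> 'a \<Rightarrow> real) \<Rightarrow> bool" where
  "bounded_measurable_SA Ms Ma f \<longleftrightarrow>
     (\<exists>B. \<forall>s\<in>space Ms. \<forall>a\<in>space Ma. \<bar>f s a\<bar> \<le> B) \<and>
     case_prod f \<in> borel_measurable (Ms \<Otimes>\<^sub>M Ma)"

definition next_exp ::
  "'s measure \<Rightarrow> ('s \<Rightarrow> 'a \<Rightarrow> 's \<Rightarrow> real) \<Rightarrow> 's \<Rightarrow> 'a \<Rightarrow> ('s \<Rightarrow> real) \<Rightarrow> real" where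
  "next_exp Ms p s a g = (\<integral>s'. p s a s' * g s' \<partial>Ms)"

definition soft_value :: "'a measure \<Rightarrow> ('s \<Rightarrow> 'a \<Rightarrow> real) \<Rightarrow> 's \<Rightarrow> real" where
  "soft_value Ma Q s = ln (\<integral>a. exp (Q s a) \<partial>Ma)"

definition soft_policy :: "'a measure \<Rightarrow> ('s \<Rightarrow> 'a \<Rightarrow> real) \<Rightarrow> 's \<Rightarrow> 'a \<Rightarrow> real" where
  "soft_policy Ma Q s a = exp (Q s a) / (\<integral>b. exp (Q s b) \<partial>Ma)"

definition optimal_soft_Q ::
  "'s measure \<Rightarrow> 'a measure \<Rightarrow> ('s \<Rightarrow> 'a \<Rightarrow> 's \<Rightarrow> real) \<Rightarrow> real \<Rightarrow>
   ('s \<Rightarrow> 'a \<Rightarrow> real) \<Rightarrow> ('s \<Rightarrow> 'a \<Rightarrow> real) \<Rightarrow> bool" where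
  "optimal_soft_Q Ms Ma p \<gamma> r Q \<longleftrightarrow>
     bounded_measurable_SA Ms Ma Q \<and>
     (\<forall>s\<in>space Ms. \<forall>a\<in>space Ma.
        Q s a = r s a + \<gamma> * next_exp Ms p s a (soft_value Ma Q))"

definition policy_soft_Q ::
  "'s measure \<Rightarrow> 'a measure \<Rightarrow> ('s \<Rightarrow> 'a \<Rightarrow> 's \<Rightarrow> real) \<Rightarrow> real \<Rightarrow>
   ('s \<Rightarrow> 'a \<Rightarrow> real) \<Rightarrow> ('s \<Rightarrow> 'a \<Rightarrow> real) \<Rightarrow> ('s \<Rightarrow> 'a \<Rightarrow> real) \<Rightarrow> bool" where
  "policy_soft_Q Ms Ma p \<gamma> r \<pi> Q \<longleftrightarrow>
     bounded_measurable_SA Ms Ma Q \<and>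
     (\<forall>s\<in>space Ms. \<forall>a\<in>space Ma.
        Q s a = r s a + \<gamma> * next_exp Ms p s a
          (\<lambda>s'. \<integral>a'. \<pi> s' a' * (Q s' a' - ln (\<pi> s' a')) \<partial>Ma))"

definition renyi_half :: "'a measure \<Rightarrow> ('a \<Rightarrow> real) \<Rightarrow> ('a \<Rightarrow> real) \<Rightarrow> real" where
  "renyi_half Ma P Q = - 2 * ln (\<integral>a. sqrt (P a * Q a) \<partial>Ma)"

text \<open>The maximum is rendered as a supremum over the action space; we require
s' |-> sup_{a'} C(s',a') to be measurable so that the expectation is meaningful.\<close>
definition C_fixed ::
  "'s measure \<Rightarrow> 'a measure \<Rightarrow> ('s \<Rightarrow> 'a \<Rightarrow> 's \<Rightarrow> real) \<Rightarrow> real \<Rightarrow>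
   ('s \<Rightarrow> 'a \<Rightarrow> real) \<Rightarrow> ('s \<Rightarrow> 'a \<Rightarrow> real) \<Rightarrow> ('s \<Rightarrow> 'a \<Rightarrow> real) \<Rightarrow> bool" where
  "C_fixed Ms Ma p \<gamma> Q1 Q2 C \<longleftrightarrow>
     bounded_measurable_SA Ms Ma C \<and>
     (\<lambda>s. SUP a\<in>space Ma. C s a) \<in> borel_measurable Ms \<and>
     (\<forall>s\<in>space Ms. \<forall>a\<in>space Ma.
        C s a = \<gamma> * next_exp Ms p s a
          (\<lambda>s'. renyi_half Ma (soft_policy Ma Q1 s') (soft_policy Ma Q2 s')
                + (SUP a'\<in>space Ma. C s' a')))"

definition D_fixed ::
  "'s measure \<Rightarrow> 'a measure \<Rightarrow> ('s \<Rightarrow> 'a \<Rightarrow> 's \<Rightarrow> real) \<Rightarrow> real \<Rightarrow>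
   ('s \<Rightarrow> 'a \<Rightarrow> real) \<Rightarrow> ('s \<Rightarrow> 'a \<Rightarrow> real) \<Rightarrow> ('s \<Rightarrow> 'a \<Rightarrow> real) \<Rightarrow> bool" where
  "D_fixed Ms Ma p \<gamma> \<pi> C D \<longleftrightarrow>
     bounded_measurable_SA Ms Ma D \<and>
     (\<forall>s\<in>space Ms. \<forall>a\<in>space Ma.
        D s a = \<gamma> * next_exp Ms p s a
          (\<lambda>s'. \<integral>a'. \<pi> s' a' * (C s' a' + D s' a') \<partial>Ma))"

end

theory Submission
  imports Defs
begin

locale mdp =
  fixes Ms :: "'s measure" and Ma :: "'a measure" and p :: "'s \<Rightarrow> 'a \<Rightarrow> 's \<Rightarrow> real" and \<gamma> :: real
  assumes mdp: "soft_mdp Ms Ma p \<gamma>"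
begin

lemma sf: "sigma_finite_measure Ms" and fm: "finite_measure Ma"
  and mupos: "0 < measure Ma (space Ma)" and g0: "0 < \<gamma>" and g1: "\<gamma> < 1"
  and pmeas: "(\<lambda>((s, a), s'). p s a s') \<in> borel_measurable ((Ms \<Otimes>\<^sub>M Ma) \<Otimes>\<^sub>M Ms)"
  and pnn: "\<And>s a s'. s\<in>space Ms \<Longrightarrow> a\<in>space Ma \<Longrightarrow> s'\<in>space Ms \<Longrightarrow> 0 \<le> p s a s'"
  and pint1: "\<And>s a. s\<in>space Ms \<Longrightarrow> a\<in>space Ma \<Longrightarrow> (\<integral>s'. p s a s' \<partial>Ms) = 1"
  using mdp unfolding soft_mdp_def
  by (auto intro: finite_measureI simp: measure_def enn2real_positive_iff)

lemma sfa: "sigma_finite_measure Ma"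
  using fm unfolding finite_measure_def by simp

lemma Ma_ne: "space Ma \<noteq> {}"
  using mupos by auto

lemma p_meas: "s\<in>space Ms \<Longrightarrow> a\<in>space Ma \<Longrightarrow> p s a \<in> borel_measurable Ms"
  using measurable_Pair2[OF pmeas, of "(s,a)"] by (simp add: space_pair_measure)

lemma p_int: "s\<in>space Ms \<Longrightarrow> a\<in>space Ma \<Longrightarrow> integrable Ms (p s a)"
  using pint1 not_integrable_integral_eq by fastforce

definition good :: "('s \<Rightarrow> real) \<Rightarrow> bool" where
  "good g \<longleftrightarrow> g \<in> borel_measurable Ms \<and> (\<exists>B. \<forall>x\<in>space Ms. \<bar>g x\<bar> \<le> B)"

lemma good_int: assumes "good g" "s\<in>space Ms" "a\<in>space Ma"
  shows "integrable Ms (\<lambda>x. p s a x * g x)"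
proof -
  obtain B where B: "\<forall>x\<in>space Ms. \<bar>g x\<bar> \<le> B" using assms(1) good_def by auto
  show ?thesis
  proof (rule Bochner_Integration.integrable_bound[of _ "\<lambda>x. B * p s a x"])
    show "integrable Ms (\<lambda>x. B * p s a x)" using p_int[OF assms(2,3)] by simp
    show "(\<lambda>x. p s a x * g x) \<in> borel_measurable Ms"
      using p_meas[OF assms(2,3)] assms(1) unfolding good_def by (auto intro!: borel_measurable_times)
    show "AE x in Ms. norm (p s a x * g x) \<le> norm (B * p s a x)"
    proof (rule AE_I2)
      fix x assume x: "x \<in> space Ms"
      have "0 \<le> p s a x" using pnn assms x by auto
      moreover have "\<bar>g x\<bar> \<le> B" using B x by auto
      ultimately have "p s a x * \<bar>g x\<bar> \<le> p s a x * B" by (simp add: mult_left_mono)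
      also have "\<dots> \<le> norm (B * p s a x)" using \<open>0 \<le> p s a x\<close>
        by (simp add: abs_mult mult.commute mult_right_mono)
      finally show "norm (p s a x * g x) \<le> norm (B * p s a x)"
        using \<open>0 \<le> p s a x\<close> by (simp add: abs_mult)
    qed
  qed
qed

lemma good_ge: assumes "good g" "s\<in>space Ms" "a\<in>space Ma" "\<And>x. x\<in>space Ms \<Longrightarrow> m \<le> g x"
  shows "m \<le> next_exp Ms p s a g"
proof -
  have "m = (\<integral>x. m * p s a x \<partial>Ms)" using pint1[OF assms(2,3)] by simp
  also have "\<dots> \<le> (\<integral>x. p s a x * g x \<partial>Ms)"
    apply (rule integral_mono)
    using p_int[OF assms(2,3)] good_int[OF assms(1-3)] apply simp_all
    using assms(4) pnn[OF assms(2,3)] by (metis mult.commute mult_right_mono)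
  finally show ?thesis unfolding next_exp_def .
qed

lemma good_add: "good f \<Longrightarrow> good g \<Longrightarrow> good (\<lambda>x. f x + g x)"
  unfolding good_def apply (auto)
  subgoal for B C by (rule exI[of _ "B+C"]) (smt (verit))
  done
lemma good_diff: "good f \<Longrightarrow> good g \<Longrightarrow> good (\<lambda>x. f x - g x)"
  unfolding good_def apply (auto)
  subgoal for B C by (rule exI[of _ "B+C"]) (smt (verit))
  done
lemma good_cmult: "good f \<Longrightarrow> good (\<lambda>x. c * f x)"
  unfolding good_def apply (auto)
  subgoal for B by (rule exI[of _ "\<bar>c\<bar>*B"]) (simp add: abs_mult mult_left_mono)
  done
lemma good_cong: "good f \<Longrightarrow> (\<And>x. x\<in>space Ms \<Longrightarrow> f x = g x) \<Longrightarrow> good g"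
  unfolding good_def using measurable_cong by (metis)


lemma inf_arg:
  fixes f :: "'s \<Rightarrow> 'a \<Rightarrow> real"
  assumes bnd: "\<forall>s\<in>space Ms. \<forall>a\<in>space Ma. \<bar>f s a\<bar> \<le> B"
    and hyp: "\<And>m. (\<forall>s\<in>space Ms. \<forall>a\<in>space Ma. m \<le> f s a) \<Longrightarrow> (\<forall>s\<in>space Ms. \<forall>a\<in>space Ma. \<gamma>*m \<le> f s a)"
  shows "\<forall>s\<in>space Ms. \<forall>a\<in>space Ma. 0 \<le> f s a"
proof (cases "space Ms = {}")
  case True then show ?thesis by simp
next
  case False
  let ?A = "space Ms \<times> space Ma"
  let ?m = "Inf ((\<lambda>(s,a). f s a) ` ?A)"
  have ne: "?A \<noteq> {}" using False Ma_ne by auto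
  have bb: "bdd_below ((\<lambda>(s,a). f s a) ` ?A)"
  proof (rule bdd_belowI[of _ "-B"])
    fix x assume "x \<in> (\<lambda>(s,a). f s a) ` ?A"
    then obtain s a where "s \<in> space Ms" "a \<in> space Ma" "x = f s a" by auto
    then show "-B \<le> x" using bnd by (metis abs_le_iff minus_le_iff)
  qed
  have low: "\<forall>s\<in>space Ms. \<forall>a\<in>space Ma. ?m \<le> f s a"
  proof (intro ballI)
    fix s a assume "s \<in> space Ms" "a \<in> space Ma"
    then have "f s a \<in> (\<lambda>(s,a). f s a) ` ?A" by (intro image_eqI[of _ _ "(s,a)"]) auto
    then show "?m \<le> f s a" using bb by (rule cInf_lower)
  qed
  have "\<forall>s\<in>space Ms. \<forall>a\<in>space Ma. \<gamma>*?m \<le> f s a" using hyp[OF low] .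
  then have "\<gamma>*?m \<le> ?m"
    using ne by (intro cInf_greatest) auto
  then have "(1 - \<gamma>) * ?m \<ge> 0" by (simp add: algebra_simps)
  then have "0 \<le> ?m" using g1 by (simp add: zero_le_mult_iff)
  then show ?thesis using low by (meson order_trans)
qed

lemma bm_sec: "bounded_measurable_SA Ms Ma Q \<Longrightarrow> s\<in>space Ms \<Longrightarrow> Q s \<in> borel_measurable Ma"
  unfolding bounded_measurable_SA_def using measurable_Pair2[of "case_prod Q" Ms Ma borel s] by simp

lemma bm_bound: assumes "bounded_measurable_SA Ms Ma Q"
  obtains B where "0 \<le> B" "\<And>s a. s\<in>space Ms \<Longrightarrow> a\<in>space Ma \<Longrightarrow> \<bar>Q s a\<bar> \<le> B"
proof -
  obtain B where "\<forall>s\<in>space Ms. \<forall>a\<in>space Ma. \<bar>Q s a\<bar> \<le> B"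
    using assms unfolding bounded_measurable_SA_def by auto
  then show ?thesis by (intro that[of "max B 0"]) (auto simp: le_max_iff_disj)
qed

lemma bm_meas: "bounded_measurable_SA Ms Ma Q \<Longrightarrow> case_prod Q \<in> borel_measurable (Ms \<Otimes>\<^sub>M Ma)"
  unfolding bounded_measurable_SA_def by simp

lemma int_bdd: fixes h :: "'a \<Rightarrow> real" shows "h \<in> borel_measurable Ma \<Longrightarrow> (\<And>a. a\<in>space Ma \<Longrightarrow> \<bar>h a\<bar> \<le> B) \<Longrightarrow> integrable Ma h"
  by (rule finite_measure.integrable_const_bound[OF fm, of _ B]) auto

lemma int_ge: fixes h :: "'a \<Rightarrow> real" shows "h \<in> borel_measurable Ma \<Longrightarrow> (\<And>a. a\<in>space Ma \<Longrightarrow> \<bar>h a\<bar> \<le> B) \<Longrightarrow>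
   (\<And>a. a\<in>space Ma \<Longrightarrow> c \<le> h a) \<Longrightarrow> c * measure Ma (space Ma) \<le> (\<integral>a. h a \<partial>Ma)"
proof -
  assume a: "h \<in> borel_measurable Ma" "\<And>a. a\<in>space Ma \<Longrightarrow> \<bar>h a\<bar> \<le> B" "\<And>a. a\<in>space Ma \<Longrightarrow> c \<le> h a"
  have "(\<integral>a. c \<partial>Ma) \<le> (\<integral>a. h a \<partial>Ma)"
  proof (rule integral_mono)
    show "integrable Ma h" using a(1,2) by (rule int_bdd)
  qed (use a(3) finite_measure.integrable_const[OF fm] in auto)
  then show ?thesis by (simp add: lebesgue_integral_const mult.commute)
qed

lemma int_le: fixes h :: "'a \<Rightarrow> real" shows "h \<in> borel_measurable Ma \<Longrightarrow> (\<And>a. a\<in>space Ma \<Longrightarrow> \<bar>h a\<bar> \<le> B) \<Longrightarrow>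
   (\<And>a. a\<in>space Ma \<Longrightarrow> h a \<le> c) \<Longrightarrow> (\<integral>a. h a \<partial>Ma) \<le> c * measure Ma (space Ma)"
proof -
  assume a: "h \<in> borel_measurable Ma" "\<And>a. a\<in>space Ma \<Longrightarrow> \<bar>h a\<bar> \<le> B" "\<And>a. a\<in>space Ma \<Longrightarrow> h a \<le> c"
  have "(\<integral>a. h a \<partial>Ma) \<le> (\<integral>a. c \<partial>Ma)"
  proof (rule integral_mono)
    show "integrable Ma h" using a(1,2) by (rule int_bdd)
  qed (use a(3) finite_measure.integrable_const[OF fm] in auto)
  then show ?thesis by (simp add: lebesgue_integral_const mult.commute)
qed

lemma joint_int_meas: fixes h :: "'s \<Rightarrow> 'a \<Rightarrow> real" shows "case_prod h \<in> borel_measurable (Ms \<Otimes>\<^sub>M Ma) \<Longrightarrow> (\<lambda>s. \<integral>a. h s a \<partial>Ma) \<in> borel_measurable Ms"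
  by (rule sigma_finite_measure.borel_measurable_lebesgue_integral[OF sfa])

lemma exp_meas: "bounded_measurable_SA Ms Ma Q \<Longrightarrow> case_prod (\<lambda>s a. exp (Q s a)) \<in> borel_measurable (Ms \<Otimes>\<^sub>M Ma)"
proof -
  assume "bounded_measurable_SA Ms Ma Q"
  then have [measurable]: "case_prod Q \<in> borel_measurable (Ms \<Otimes>\<^sub>M Ma)" by (rule bm_meas)
  have "(\<lambda>x. exp (case_prod Q x)) \<in> borel_measurable (Ms \<Otimes>\<^sub>M Ma)" by measurable
  then show ?thesis by (simp add: case_prod_beta')
qed


lemma Z_meas: "bounded_measurable_SA Ms Ma Q \<Longrightarrow> (\<lambda>s. \<integral>a. exp (Q s a) \<partial>Ma) \<in> borel_measurable Ms"
  by (rule joint_int_meas[OF exp_meas])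

lemma exp_sec_meas: "bounded_measurable_SA Ms Ma Q \<Longrightarrow> s\<in>space Ms \<Longrightarrow> (\<lambda>a. exp (Q s a)) \<in> borel_measurable Ma"
proof -
  assume "bounded_measurable_SA Ms Ma Q" "s\<in>space Ms"
  then have [measurable]: "Q s \<in> borel_measurable Ma" by (rule bm_sec)
  show ?thesis by measurable
qed

lemma Z_bounds:
  assumes Q: "bounded_measurable_SA Ms Ma Q" and s: "s\<in>space Ms"
    and B: "\<And>s a. s\<in>space Ms \<Longrightarrow> a\<in>space Ma \<Longrightarrow> \<bar>Q s a\<bar> \<le> B"
  shows "measure Ma (space Ma) * exp (-B) \<le> (\<integral>a. exp (Q s a) \<partial>Ma)"
    and "(\<integral>a. exp (Q s a) \<partial>Ma) \<le> measure Ma (space Ma) * exp B"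
proof -
  have m: "(\<lambda>a. exp (Q s a)) \<in> borel_measurable Ma" using exp_sec_meas[OF Q s] .
  have b: "\<bar>exp (Q s a)\<bar> \<le> exp B" if "a\<in>space Ma" for a
    using B[OF s that] by simp
  have lo: "-B \<le> Q s a" and hi: "Q s a \<le> B" if "a\<in>space Ma" for a
    using B[OF s that] by (auto simp: abs_le_iff)
  have "exp (-B) * measure Ma (space Ma) \<le> (\<integral>a. exp (Q s a) \<partial>Ma)"
  proof (rule int_ge[OF m b])
    fix a assume "a\<in>space Ma" then show "exp (-B) \<le> exp (Q s a)" using lo by simp
  qed
  then show "measure Ma (space Ma) * exp (-B) \<le> (\<integral>a. exp (Q s a) \<partial>Ma)" by (simp add: mult.commute)
  have "(\<integral>a. exp (Q s a) \<partial>Ma) \<le> exp B * measure Ma (space Ma)"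
  proof (rule int_le[OF m b])
    fix a assume "a\<in>space Ma" then show "exp (Q s a) \<le> exp B" using hi by simp
  qed
  then show "(\<integral>a. exp (Q s a) \<partial>Ma) \<le> measure Ma (space Ma) * exp B" by (simp add: mult.commute)
qed

lemma Z_pos: assumes Q: "bounded_measurable_SA Ms Ma Q" and s: "s\<in>space Ms"
  shows "0 < (\<integral>a. exp (Q s a) \<partial>Ma)"
proof -
  obtain B where "0 \<le> B" "\<And>s a. s\<in>space Ms \<Longrightarrow> a\<in>space Ma \<Longrightarrow> \<bar>Q s a\<bar> \<le> B"
    using bm_bound[OF Q] by metis
  from Z_bounds(1)[OF Q s this(2)] show ?thesis
    using mupos by (meson exp_gt_zero mult_pos_pos less_le_trans)
qed

lemma V_good: assumes Q: "bounded_measurable_SA Ms Ma Q" shows "good (soft_value Ma Q)"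
  unfolding good_def
proof
  have [measurable]: "(\<lambda>s. \<integral>a. exp (Q s a) \<partial>Ma) \<in> borel_measurable Ms" by (rule Z_meas[OF Q])
  show "soft_value Ma Q \<in> borel_measurable Ms" unfolding soft_value_def[abs_def] by measurable
  obtain B where B: "0 \<le> B" "\<And>s a. s\<in>space Ms \<Longrightarrow> a\<in>space Ma \<Longrightarrow> \<bar>Q s a\<bar> \<le> B"
    using bm_bound[OF Q] by metis
  show "\<exists>B. \<forall>x\<in>space Ms. \<bar>soft_value Ma Q x\<bar> \<le> B"
  proof (intro exI ballI)
    fix x assume x: "x \<in> space Ms"
    let ?Z = "\<integral>a. exp (Q x a) \<partial>Ma" and ?m = "measure Ma (space Ma)"
    have z1: "?m * exp (-B) \<le> ?Z" and z2: "?Z \<le> ?m * exp B" using Z_bounds[OF Q x B(2)] by auto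
    have p1: "0 < ?m * exp (-B)" using mupos by simp
    have "ln (?m * exp (-B)) \<le> ln ?Z" using z1 p1 by (subst ln_le_cancel_iff) auto
    then have l1: "ln ?m - B \<le> ln ?Z" using mupos by (simp add: ln_mult)
    have "ln ?Z \<le> ln (?m * exp B)" using z2 z1 p1 by (subst ln_le_cancel_iff) auto
    then have l2: "ln ?Z \<le> ln ?m + B" using mupos by (simp add: ln_mult)
    show "\<bar>soft_value Ma Q x\<bar> \<le> \<bar>ln ?m\<bar> + B"
      unfolding soft_value_def using l1 l2 by linarith
  qed
qed

lemma lse_mono:
  assumes Q: "bounded_measurable_SA Ms Ma Q" and Q': "bounded_measurable_SA Ms Ma Q'" and s: "s\<in>space Ms"
    and le: "\<And>a. a\<in>space Ma \<Longrightarrow> Q s a + m \<le> Q' s a"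
  shows "soft_value Ma Q s + m \<le> soft_value Ma Q' s"
proof -
  obtain B where B: "0 \<le> B" "\<And>s a. s\<in>space Ms \<Longrightarrow> a\<in>space Ma \<Longrightarrow> \<bar>Q s a\<bar> \<le> B"
    using bm_bound[OF Q] by metis
  obtain B' where B': "0 \<le> B'" "\<And>s a. s\<in>space Ms \<Longrightarrow> a\<in>space Ma \<Longrightarrow> \<bar>Q' s a\<bar> \<le> B'"
    using bm_bound[OF Q'] by metis
  have i1: "integrable Ma (\<lambda>a. exp m * exp (Q s a))"
    by (rule int_bdd[of _ "exp m * exp B"]) (use exp_sec_meas[OF Q s] B(2)[OF s] in \<open>auto simp: abs_le_iff\<close>)
  have i2: "integrable Ma (\<lambda>a. exp (Q' s a))"
    by (rule int_bdd[of _ "exp B'"]) (use exp_sec_meas[OF Q' s] B'(2)[OF s] in \<open>auto simp: abs_le_iff\<close>)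
  have "(\<integral>a. exp m * exp (Q s a) \<partial>Ma) \<le> (\<integral>a. exp (Q' s a) \<partial>Ma)"
  proof (rule integral_mono[OF i1 i2])
    fix a assume "a \<in> space Ma"
    then show "exp m * exp (Q s a) \<le> exp (Q' s a)" using le by (simp add: exp_add[symmetric] add.commute)
  qed
  then have "exp m * (\<integral>a. exp (Q s a) \<partial>Ma) \<le> (\<integral>a. exp (Q' s a) \<partial>Ma)" by simp
  then have "ln (exp m * (\<integral>a. exp (Q s a) \<partial>Ma)) \<le> ln (\<integral>a. exp (Q' s a) \<partial>Ma)"
    using Z_pos[OF Q s] Z_pos[OF Q' s] by (subst ln_le_cancel_iff) auto
  then show ?thesis unfolding soft_value_def using Z_pos[OF Q s] by (simp add: ln_mult)
qed

lemma bm_avg: "bounded_measurable_SA Ms Ma Q1 \<Longrightarrow> bounded_measurable_SA Ms Ma Q2 \<Longrightarrow>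
   bounded_measurable_SA Ms Ma (\<lambda>s a. (Q1 s a + Q2 s a) / 2)"
proof -
  assume a1: "bounded_measurable_SA Ms Ma Q1" and a2: "bounded_measurable_SA Ms Ma Q2"
  obtain B1 where "0 \<le> B1" and B1: "\<And>s a. s\<in>space Ms \<Longrightarrow> a\<in>space Ma \<Longrightarrow> \<bar>Q1 s a\<bar> \<le> B1" using bm_bound[OF a1] by metis
  obtain B2 where "0 \<le> B2" and B2: "\<And>s a. s\<in>space Ms \<Longrightarrow> a\<in>space Ma \<Longrightarrow> \<bar>Q2 s a\<bar> \<le> B2" using bm_bound[OF a2] by metis
  have [measurable]: "case_prod Q1 \<in> borel_measurable (Ms \<Otimes>\<^sub>M Ma)" "case_prod Q2 \<in> borel_measurable (Ms \<Otimes>\<^sub>M Ma)"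
    using a1 a2 by (auto dest: bm_meas)
  have m0: "(\<lambda>x. (case_prod Q1 x + case_prod Q2 x) / 2) \<in> borel_measurable (Ms \<Otimes>\<^sub>M Ma)" by measurable
  have fe: "(\<lambda>x. (case_prod Q1 x + case_prod Q2 x) / 2) = case_prod (\<lambda>s a. (Q1 s a + Q2 s a) / 2)"
    by (simp add: fun_eq_iff split_beta)
  have m: "case_prod (\<lambda>s a. (Q1 s a + Q2 s a) / 2) \<in> borel_measurable (Ms \<Otimes>\<^sub>M Ma)"
    using m0 unfolding fe .
  have b: "\<forall>s\<in>space Ms. \<forall>a\<in>space Ma. \<bar>(Q1 s a + Q2 s a) / 2\<bar> \<le> (B1 + B2)/2"
  proof (intro ballI)
    fix s a assume sa: "s\<in>space Ms" "a\<in>space Ma"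
    have "\<bar>Q1 s a + Q2 s a\<bar> \<le> B1 + B2"
      using abs_triangle_ineq[of "Q1 s a" "Q2 s a"] B1[OF sa] B2[OF sa] by linarith
    then show "\<bar>(Q1 s a + Q2 s a) / 2\<bar> \<le> (B1 + B2)/2" by simp
  qed
  show ?thesis unfolding bounded_measurable_SA_def using m b by (intro conjI exI)
qed


lemma abs_lo: "\<bar>x::real\<bar> \<le> B \<Longrightarrow> -B \<le> x" by linarith
lemma abs_hi: "\<bar>x::real\<bar> \<le> B \<Longrightarrow> x \<le> B" by linarith

lemma expmul_int:
  assumes Q: "bounded_measurable_SA Ms Ma Q" and s: "s\<in>space Ms"
    and hm: "h \<in> borel_measurable Ma" and hb: "\<And>a. a\<in>space Ma \<Longrightarrow> \<bar>h a\<bar> \<le> Bh"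
  shows "integrable Ma (\<lambda>a. exp (Q s a) * h a)"
proof -
  obtain B where B: "0 \<le> B" "\<And>s a. s\<in>space Ms \<Longrightarrow> a\<in>space Ma \<Longrightarrow> \<bar>Q s a\<bar> \<le> B"
    using bm_bound[OF Q] by metis
  have [measurable]: "Q s \<in> borel_measurable Ma" using bm_sec[OF Q s] .
  have [measurable]: "h \<in> borel_measurable Ma" using hm .
  show ?thesis
  proof (rule int_bdd[of _ "exp B * Bh"])
    show "(\<lambda>a. exp (Q s a) * h a) \<in> borel_measurable Ma" by measurable
  next
    fix a assume a: "a\<in>space Ma"
    have "exp (Q s a) \<le> exp B" using B(2)[OF s a] by (simp add: abs_le_iff)
    then have "exp (Q s a) * \<bar>h a\<bar> \<le> exp B * Bh"
      using hb[OF a] by (intro mult_mono) auto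
    then show "\<bar>exp (Q s a) * h a\<bar> \<le> exp B * Bh" by (simp add: abs_mult)
  qed
qed

lemma pav_eq:
  assumes Q: "bounded_measurable_SA Ms Ma Q" and s: "s\<in>space Ms"
  shows "(\<integral>a. soft_policy Ma Q s a * h a \<partial>Ma) = (\<integral>a. exp (Q s a) * h a \<partial>Ma) / (\<integral>a. exp (Q s a) \<partial>Ma)"
proof -
  have "(\<integral>a. soft_policy Ma Q s a * h a \<partial>Ma) = (\<integral>a. exp (Q s a) * h a / (\<integral>a. exp (Q s a) \<partial>Ma) \<partial>Ma)"
    unfolding soft_policy_def by (rule Bochner_Integration.integral_cong) auto
  also have "\<dots> = (\<integral>a. exp (Q s a) * h a \<partial>Ma) / (\<integral>a. exp (Q s a) \<partial>Ma)"
    by (rule integral_divide_zero)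
  finally show ?thesis .
qed

lemma pav_int:
  assumes Q: "bounded_measurable_SA Ms Ma Q" and s: "s\<in>space Ms"
    and hm: "h \<in> borel_measurable Ma" and hb: "\<And>a. a\<in>space Ma \<Longrightarrow> \<bar>h a\<bar> \<le> Bh"
  shows "integrable Ma (\<lambda>a. soft_policy Ma Q s a * h a)"
proof -
  have "integrable Ma (\<lambda>a. exp (Q s a) * h a / (\<integral>a. exp (Q s a) \<partial>Ma))"
    using expmul_int[OF Q s hm hb] by (rule integrable_divide_zero)
  then show ?thesis unfolding soft_policy_def by simp
qed

lemma pav_ge:
  assumes Q: "bounded_measurable_SA Ms Ma Q" and s: "s\<in>space Ms"
    and hm: "h \<in> borel_measurable Ma" and hb: "\<And>a. a\<in>space Ma \<Longrightarrow> \<bar>h a\<bar> \<le> Bh"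
    and ge: "\<And>a. a\<in>space Ma \<Longrightarrow> c \<le> h a"
  shows "c \<le> (\<integral>a. soft_policy Ma Q s a * h a \<partial>Ma)"
proof -
  have i0: "integrable Ma (\<lambda>a. exp (Q s a) * c)"
    by (rule expmul_int[OF Q s, of _ "\<bar>c\<bar>"]) auto
  have "(\<integral>a. exp (Q s a) * c \<partial>Ma) \<le> (\<integral>a. exp (Q s a) * h a \<partial>Ma)"
  proof (rule integral_mono[OF i0 expmul_int[OF Q s hm hb]])
    fix a assume "a \<in> space Ma" then show "exp (Q s a) * c \<le> exp (Q s a) * h a"
      using ge by (intro mult_left_mono) auto
  qed
  then have "c * (\<integral>a. exp (Q s a) \<partial>Ma) \<le> (\<integral>a. exp (Q s a) * h a \<partial>Ma)"
    by (simp add: mult.commute)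
  then show ?thesis unfolding pav_eq[OF Q s] using Z_pos[OF Q s] by (simp add: pos_le_divide_eq)
qed

lemma pav_le:
  assumes Q: "bounded_measurable_SA Ms Ma Q" and s: "s\<in>space Ms"
    and hm: "h \<in> borel_measurable Ma" and hb: "\<And>a. a\<in>space Ma \<Longrightarrow> \<bar>h a\<bar> \<le> Bh"
    and le: "\<And>a. a\<in>space Ma \<Longrightarrow> h a \<le> c"
  shows "(\<integral>a. soft_policy Ma Q s a * h a \<partial>Ma) \<le> c"
proof -
  have i0: "integrable Ma (\<lambda>a. exp (Q s a) * c)"
    by (rule expmul_int[OF Q s, of _ "\<bar>c\<bar>"]) auto
  have "(\<integral>a. exp (Q s a) * h a \<partial>Ma) \<le> (\<integral>a. exp (Q s a) * c \<partial>Ma)"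
  proof (rule integral_mono[OF expmul_int[OF Q s hm hb] i0])
    fix a assume "a \<in> space Ma" then show "exp (Q s a) * h a \<le> exp (Q s a) * c"
      using le by (intro mult_left_mono) auto
  qed
  then have "(\<integral>a. exp (Q s a) * h a \<partial>Ma) \<le> c * (\<integral>a. exp (Q s a) \<partial>Ma)"
    by (simp add: mult.commute)
  then show ?thesis unfolding pav_eq[OF Q s] using Z_pos[OF Q s] by (simp add: pos_divide_le_eq)
qed

lemma pav_one:
  assumes Q: "bounded_measurable_SA Ms Ma Q" and s: "s\<in>space Ms"
  shows "(\<integral>a. soft_policy Ma Q s a \<partial>Ma) = 1"
  using pav_eq[OF Q s, of "\<lambda>_. 1"] Z_pos[OF Q s] by simp

lemma pav_good:
  assumes Q: "bounded_measurable_SA Ms Ma Q" and h: "bounded_measurable_SA Ms Ma h"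
  shows "good (\<lambda>s. \<integral>a. soft_policy Ma Q s a * h s a \<partial>Ma)"
proof -
  obtain Bh where Bh: "0 \<le> Bh" "\<And>s a. s\<in>space Ms \<Longrightarrow> a\<in>space Ma \<Longrightarrow> \<bar>h s a\<bar> \<le> Bh"
    using bm_bound[OF h] by metis
  have [measurable]: "case_prod Q \<in> borel_measurable (Ms \<Otimes>\<^sub>M Ma)" "case_prod h \<in> borel_measurable (Ms \<Otimes>\<^sub>M Ma)"
    using Q h by (auto dest: bm_meas)
  have "(\<lambda>x. exp (case_prod Q x) * case_prod h x) \<in> borel_measurable (Ms \<Otimes>\<^sub>M Ma)" by measurable
  then have "case_prod (\<lambda>s a. exp (Q s a) * h s a) \<in> borel_measurable (Ms \<Otimes>\<^sub>M Ma)"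
    by (simp add: case_prod_beta')
  then have [measurable]: "(\<lambda>s. \<integral>a. exp (Q s a) * h s a \<partial>Ma) \<in> borel_measurable Ms"
    by (rule joint_int_meas)
  have [measurable]: "(\<lambda>s. \<integral>a. exp (Q s a) \<partial>Ma) \<in> borel_measurable Ms" by (rule Z_meas[OF Q])
  have g: "good (\<lambda>s. (\<integral>a. exp (Q s a) * h s a \<partial>Ma) / (\<integral>a. exp (Q s a) \<partial>Ma))"
    unfolding good_def
  proof
    show "(\<lambda>s. (\<integral>a. exp (Q s a) * h s a \<partial>Ma) / (\<integral>a. exp (Q s a) \<partial>Ma)) \<in> borel_measurable Ms"
      by measurable
    show "\<exists>B. \<forall>x\<in>space Ms. \<bar>(\<integral>a. exp (Q x a) * h x a \<partial>Ma) / (\<integral>a. exp (Q x a) \<partial>Ma)\<bar> \<le> B"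
    proof (intro exI ballI)
      fix x assume x: "x \<in> space Ms"
      have m: "h x \<in> borel_measurable Ma" by (rule bm_sec[OF h x])
      have "- Bh \<le> (\<integral>a. soft_policy Ma Q x a * h x a \<partial>Ma)"
      proof (rule pav_ge[OF Q x m Bh(2)[OF x]])
        fix a assume "a \<in> space Ma" then show "- Bh \<le> h x a" using Bh(2)[OF x] abs_lo by blast
      qed
      moreover have "(\<integral>a. soft_policy Ma Q x a * h x a \<partial>Ma) \<le> Bh"
      proof (rule pav_le[OF Q x m Bh(2)[OF x]])
        fix a assume "a \<in> space Ma" then show "h x a \<le> Bh" using Bh(2)[OF x] abs_hi by blast
      qed
      ultimately show "\<bar>(\<integral>a. exp (Q x a) * h x a \<partial>Ma) / (\<integral>a. exp (Q x a) \<partial>Ma)\<bar> \<le> Bh"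
        unfolding pav_eq[OF Q x] by (simp add: abs_le_iff)
    qed
  qed
  show ?thesis
    by (rule good_cong[OF g]) (simp add: pav_eq[OF Q])
qed


lemma amgm_exp: "2 * exp ((u + v) / 2) \<le> exp u + exp (v::real)"
proof -
  have "0 \<le> (exp (u/2) - exp (v/2))^2" by simp
  also have "\<dots> = exp (u/2)^2 + exp (v/2)^2 - 2 * (exp (u/2) * exp (v/2))" by (simp add: power2_eq_square algebra_simps)
  also have "exp (u/2)^2 = exp u" by (simp add: power2_eq_square exp_add[symmetric])
  also have "exp (v/2)^2 = exp v" by (simp add: power2_eq_square exp_add[symmetric])
  also have "exp (u/2) * exp (v/2) = exp ((u+v)/2)" by (simp add: exp_add[symmetric] add_divide_distrib)
  finally show ?thesis by simp
qed

lemma exp_int: assumes Q: "bounded_measurable_SA Ms Ma Q" and s: "s\<in>space Ms"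
  shows "integrable Ma (\<lambda>a. exp (Q s a))"
  using expmul_int[OF Q s, of "\<lambda>_. 1" 1] by simp

lemma holder:
  assumes Q1: "bounded_measurable_SA Ms Ma Q1" and Q2: "bounded_measurable_SA Ms Ma Q2" and s: "s\<in>space Ms"
  shows "2 * soft_value Ma (\<lambda>s a. (Q1 s a + Q2 s a) / 2) s \<le> soft_value Ma Q1 s + soft_value Ma Q2 s"
proof -
  define QS where "QS = (\<lambda>s a. (Q1 s a + Q2 s a) / (2::real))"
  have QSb: "bounded_measurable_SA Ms Ma QS" unfolding QS_def using bm_avg[OF Q1 Q2] .
  define Z1 where "Z1 = (\<integral>a. exp (Q1 s a) \<partial>Ma)"
  define Z2 where "Z2 = (\<integral>a. exp (Q2 s a) \<partial>Ma)"
  define ZS where "ZS = (\<integral>a. exp (QS s a) \<partial>Ma)"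
  have z1: "0 < Z1" unfolding Z1_def by (rule Z_pos[OF Q1 s])
  have z2: "0 < Z2" unfolding Z2_def by (rule Z_pos[OF Q2 s])
  have zs: "0 < ZS" unfolding ZS_def by (rule Z_pos[OF QSb s])
  define c where "c = (ln Z2 - ln Z1) / 2"
  have pw: "2 * exp (QS s a) \<le> exp c * exp (Q1 s a) + exp (-c) * exp (Q2 s a)" for a
  proof -
    have "2 * exp (((c + Q1 s a) + (Q2 s a - c)) / 2) \<le> exp (c + Q1 s a) + exp (Q2 s a - c)"
      by (rule amgm_exp)
    moreover have "((c + Q1 s a) + (Q2 s a - c)) / 2 = QS s a" unfolding QS_def by simp
    moreover have "exp (c + Q1 s a) = exp c * exp (Q1 s a)" by (rule exp_add)
    moreover have "exp (Q2 s a - c) = exp (-c) * exp (Q2 s a)"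
      using exp_add[of "-c" "Q2 s a"] by simp
    ultimately show ?thesis by simp
  qed
  have i1: "integrable Ma (\<lambda>a. 2 * exp (QS s a))" using exp_int[OF QSb s] by simp
  have i2: "integrable Ma (\<lambda>a. exp c * exp (Q1 s a) + exp (-c) * exp (Q2 s a))"
    using exp_int[OF Q1 s] exp_int[OF Q2 s] by simp
  have "(\<integral>a. 2 * exp (QS s a) \<partial>Ma) \<le> (\<integral>a. exp c * exp (Q1 s a) + exp (-c) * exp (Q2 s a) \<partial>Ma)"
    by (rule integral_mono[OF i1 i2 pw])
  also have "\<dots> = exp c * Z1 + exp (-c) * Z2"
    unfolding Z1_def Z2_def using exp_int[OF Q1 s] exp_int[OF Q2 s] by simp
  finally have "2 * ZS \<le> exp c * Z1 + exp (-c) * Z2" unfolding ZS_def by simp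
  also have "exp c * Z1 = exp ((ln Z1 + ln Z2) / 2)"
  proof -
    have "exp c * Z1 = exp (c + ln Z1)" using z1 by (simp add: exp_add)
    also have "c + ln Z1 = (ln Z1 + ln Z2) / 2" by (simp add: c_def field_simps)
    finally show ?thesis .
  qed
  also have "exp (-c) * Z2 = exp ((ln Z1 + ln Z2) / 2)"
  proof -
    have "exp (-c) * Z2 = exp (-c + ln Z2)" using z2 exp_add[of "-c" "ln Z2"] by simp
    also have "-c + ln Z2 = (ln Z1 + ln Z2) / 2" by (simp add: c_def field_simps)
    finally show ?thesis .
  qed
  finally have "ZS \<le> exp ((ln Z1 + ln Z2) / 2)" by simp
  then have "ln ZS \<le> (ln Z1 + ln Z2) / 2" using zs
    by (metis ln_exp ln_le_cancel_iff exp_gt_zero)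
  then show ?thesis unfolding soft_value_def ZS_def Z1_def Z2_def QS_def by simp
qed


lemma renyi_eq:
  assumes Q1: "bounded_measurable_SA Ms Ma Q1" and Q2: "bounded_measurable_SA Ms Ma Q2" and s: "s\<in>space Ms"
  shows "renyi_half Ma (soft_policy Ma Q1 s) (soft_policy Ma Q2 s) =
    soft_value Ma Q1 s + soft_value Ma Q2 s - 2 * soft_value Ma (\<lambda>s a. (Q1 s a + Q2 s a) / 2) s"
proof -
  define QS where "QS = (\<lambda>s a. (Q1 s a + Q2 s a) / (2::real))"
  have QSb: "bounded_measurable_SA Ms Ma QS" unfolding QS_def using bm_avg[OF Q1 Q2] .
  define Z1 where "Z1 = (\<integral>a. exp (Q1 s a) \<partial>Ma)"
  define Z2 where "Z2 = (\<integral>a. exp (Q2 s a) \<partial>Ma)"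
  define ZS where "ZS = (\<integral>a. exp (QS s a) \<partial>Ma)"
  have z1: "0 < Z1" unfolding Z1_def by (rule Z_pos[OF Q1 s])
  have z2: "0 < Z2" unfolding Z2_def by (rule Z_pos[OF Q2 s])
  have zs: "0 < ZS" unfolding ZS_def by (rule Z_pos[OF QSb s])
  have pw: "sqrt (soft_policy Ma Q1 s a * soft_policy Ma Q2 s a) = exp (QS s a) / sqrt (Z1 * Z2)" for a
  proof -
    have e: "exp (Q1 s a) * exp (Q2 s a) = (exp (QS s a))^2"
      unfolding QS_def power2_eq_square exp_add[symmetric] by simp
    have "soft_policy Ma Q1 s a * soft_policy Ma Q2 s a = (exp (QS s a))^2 / (Z1 * Z2)"
      unfolding soft_policy_def Z1_def[symmetric] Z2_def[symmetric] e[symmetric] by simp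
    then show ?thesis by (simp add: real_sqrt_divide)
  qed
  have "(\<integral>a. sqrt (soft_policy Ma Q1 s a * soft_policy Ma Q2 s a) \<partial>Ma) = (\<integral>a. exp (QS s a) / sqrt (Z1 * Z2) \<partial>Ma)"
    by (simp add: pw)
  also have "\<dots> = ZS / sqrt (Z1 * Z2)" unfolding ZS_def by (rule integral_divide_zero)
  finally have I: "(\<integral>a. sqrt (soft_policy Ma Q1 s a * soft_policy Ma Q2 s a) \<partial>Ma) = ZS / sqrt (Z1 * Z2)" .
  have "ln (ZS / sqrt (Z1 * Z2)) = ln ZS - (ln Z1 + ln Z2) / 2"
    using z1 z2 zs by (simp add: ln_divide_pos ln_sqrt ln_mult)
  moreover have "ZS = (\<integral>a. exp ((Q1 s a + Q2 s a) / 2) \<partial>Ma)" unfolding ZS_def QS_def by simp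
  ultimately show ?thesis unfolding renyi_half_def I soft_value_def
    by (simp add: Z1_def[symmetric] Z2_def[symmetric])
qed


lemma good_div: "good f \<Longrightarrow> good (\<lambda>x. f x / c)"
  using good_cmult[of f "1/c"] by simp

lemma ne_add: "good f \<Longrightarrow> good g \<Longrightarrow> s\<in>space Ms \<Longrightarrow> a\<in>space Ma \<Longrightarrow>
  next_exp Ms p s a (\<lambda>x. f x + g x) = next_exp Ms p s a f + next_exp Ms p s a g"
  unfolding next_exp_def distrib_left
  by (rule Bochner_Integration.integral_add) (auto intro: good_int)

lemma ne_diff: "good f \<Longrightarrow> good g \<Longrightarrow> s\<in>space Ms \<Longrightarrow> a\<in>space Ma \<Longrightarrow>
  next_exp Ms p s a (\<lambda>x. f x - g x) = next_exp Ms p s a f - next_exp Ms p s a g"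
  unfolding next_exp_def right_diff_distrib
  by (rule Bochner_Integration.integral_diff) (auto intro: good_int)

lemma ne_div: "next_exp Ms p s a (\<lambda>x. f x / c) = next_exp Ms p s a f / c"
  unfolding next_exp_def times_divide_eq_right by (rule integral_divide_zero)

lemma bm_add: "bounded_measurable_SA Ms Ma f \<Longrightarrow> bounded_measurable_SA Ms Ma g \<Longrightarrow>
   bounded_measurable_SA Ms Ma (\<lambda>s a. f s a + g s a)"
proof -
  assume a1: "bounded_measurable_SA Ms Ma f" and a2: "bounded_measurable_SA Ms Ma g"
  obtain B1 where "0 \<le> B1" and B1: "\<And>s a. s\<in>space Ms \<Longrightarrow> a\<in>space Ma \<Longrightarrow> \<bar>f s a\<bar> \<le> B1" using bm_bound[OF a1] by metis
  obtain B2 where "0 \<le> B2" and B2: "\<And>s a. s\<in>space Ms \<Longrightarrow> a\<in>space Ma \<Longrightarrow> \<bar>g s a\<bar> \<le> B2" using bm_bound[OF a2] by metis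
  have [measurable]: "case_prod f \<in> borel_measurable (Ms \<Otimes>\<^sub>M Ma)" "case_prod g \<in> borel_measurable (Ms \<Otimes>\<^sub>M Ma)"
    using a1 a2 by (simp_all add: bm_meas)
  have m0: "(\<lambda>x. case_prod f x + case_prod g x) \<in> borel_measurable (Ms \<Otimes>\<^sub>M Ma)" by measurable
  have fe: "(\<lambda>x. case_prod f x + case_prod g x) = case_prod (\<lambda>s a. f s a + g s a)"
    by (simp add: fun_eq_iff split_beta)
  have m: "case_prod (\<lambda>s a. f s a + g s a) \<in> borel_measurable (Ms \<Otimes>\<^sub>M Ma)"
    using m0 unfolding fe .
  have b: "\<forall>s\<in>space Ms. \<forall>a\<in>space Ma. \<bar>f s a + g s a\<bar> \<le> B1 + B2"
  proof (intro ballI)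
    fix s a assume sa: "s\<in>space Ms" "a\<in>space Ma"
    show "\<bar>f s a + g s a\<bar> \<le> B1 + B2"
      using abs_triangle_ineq[of "f s a" "g s a"] B1[OF sa] B2[OF sa] by linarith
  qed
  show ?thesis unfolding bounded_measurable_SA_def using m b by (intro conjI exI)
qed

lemma bm_diff: "bounded_measurable_SA Ms Ma f \<Longrightarrow> bounded_measurable_SA Ms Ma g \<Longrightarrow>
   bounded_measurable_SA Ms Ma (\<lambda>s a. f s a - g s a)"
proof -
  assume a1: "bounded_measurable_SA Ms Ma f" and a2: "bounded_measurable_SA Ms Ma g"
  obtain B1 where "0 \<le> B1" and B1: "\<And>s a. s\<in>space Ms \<Longrightarrow> a\<in>space Ma \<Longrightarrow> \<bar>f s a\<bar> \<le> B1" using bm_bound[OF a1] by metis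
  obtain B2 where "0 \<le> B2" and B2: "\<And>s a. s\<in>space Ms \<Longrightarrow> a\<in>space Ma \<Longrightarrow> \<bar>g s a\<bar> \<le> B2" using bm_bound[OF a2] by metis
  have [measurable]: "case_prod f \<in> borel_measurable (Ms \<Otimes>\<^sub>M Ma)" "case_prod g \<in> borel_measurable (Ms \<Otimes>\<^sub>M Ma)"
    using a1 a2 by (simp_all add: bm_meas)
  have m0: "(\<lambda>x. case_prod f x - case_prod g x) \<in> borel_measurable (Ms \<Otimes>\<^sub>M Ma)" by measurable
  have fe: "(\<lambda>x. case_prod f x - case_prod g x) = case_prod (\<lambda>s a. f s a - g s a)"
    by (simp add: fun_eq_iff split_beta)
  have m: "case_prod (\<lambda>s a. f s a - g s a) \<in> borel_measurable (Ms \<Otimes>\<^sub>M Ma)"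
    using m0 unfolding fe .
  have b: "\<forall>s\<in>space Ms. \<forall>a\<in>space Ma. \<bar>f s a - g s a\<bar> \<le> B1 + B2"
  proof (intro ballI)
    fix s a assume sa: "s\<in>space Ms" "a\<in>space Ma"
    show "\<bar>f s a - g s a\<bar> \<le> B1 + B2"
      using abs_triangle_ineq4[of "f s a" "g s a"] B1[OF sa] B2[OF sa] by linarith
  qed
  show ?thesis unfolding bounded_measurable_SA_def using m b by (intro conjI exI)
qed

lemma ln_policy: assumes Q: "bounded_measurable_SA Ms Ma Q" and s: "s\<in>space Ms"
  shows "ln (soft_policy Ma Q s a) = Q s a - soft_value Ma Q s"
  unfolding soft_policy_def soft_value_def using Z_pos[OF Q s] by (simp add: ln_divide_pos)


lemma main:
  fixes r1 r2 Q1 Q2 QC C D Q\<pi> :: "'s \<Rightarrow> 'a \<Rightarrow> real"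
  assumes r1: "bounded_measurable_SA Ms Ma r1"
    and r2: "bounded_measurable_SA Ms Ma r2"
    and Q1: "optimal_soft_Q Ms Ma p \<gamma> r1 Q1"
    and Q2: "optimal_soft_Q Ms Ma p \<gamma> r2 Q2"
    and QC: "optimal_soft_Q Ms Ma p \<gamma> (\<lambda>s a. (r1 s a + r2 s a) / 2) QC"
    and C: "C_fixed Ms Ma p \<gamma> Q1 Q2 C"
    and D: "D_fixed Ms Ma p \<gamma> (soft_policy Ma (\<lambda>s a. (Q1 s a + Q2 s a) / 2)) C D"
    and Q\<pi>: "policy_soft_Q Ms Ma p \<gamma> (\<lambda>s a. (r1 s a + r2 s a) / 2)
               (soft_policy Ma (\<lambda>s a. (Q1 s a + Q2 s a) / 2)) Q\<pi>"
  shows "\<forall>s\<in>space Ms. \<forall>a\<in>space Ma. QC s a - D s a \<le> Q\<pi> s a"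
proof -
  define QS where "QS = (\<lambda>s a. (Q1 s a + Q2 s a) / (2::real))"
  define \<pi> where "\<pi> = soft_policy Ma QS"
  define V1 where "V1 = soft_value Ma Q1"
  define V2 where "V2 = soft_value Ma Q2"
  define VS where "VS = soft_value Ma QS"
  define VC where "VC = soft_value Ma QC"
  define SC where "SC = (\<lambda>s. SUP a\<in>space Ma. C s a)"
  define Dv where "Dv = (\<lambda>s. renyi_half Ma (soft_policy Ma Q1 s) (soft_policy Ma Q2 s))"
  have bQ1: "bounded_measurable_SA Ms Ma Q1" using Q1 unfolding optimal_soft_Q_def by blast
  have bQ2: "bounded_measurable_SA Ms Ma Q2" using Q2 unfolding optimal_soft_Q_def by blast
  have bQC: "bounded_measurable_SA Ms Ma QC" using QC unfolding optimal_soft_Q_def by blast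
  have bC: "bounded_measurable_SA Ms Ma C" using C unfolding C_fixed_def by blast
  have bD: "bounded_measurable_SA Ms Ma D" using D unfolding D_fixed_def by blast
  have bQ\<pi>: "bounded_measurable_SA Ms Ma Q\<pi>" using Q\<pi> unfolding policy_soft_Q_def by blast
  have bQS: "bounded_measurable_SA Ms Ma QS" unfolding QS_def by (rule bm_avg[OF bQ1 bQ2])
  have eQ1: "\<And>s a. s\<in>space Ms \<Longrightarrow> a\<in>space Ma \<Longrightarrow> Q1 s a = r1 s a + \<gamma> * next_exp Ms p s a V1"
    using Q1 unfolding optimal_soft_Q_def V1_def by blast
  have eQ2: "\<And>s a. s\<in>space Ms \<Longrightarrow> a\<in>space Ma \<Longrightarrow> Q2 s a = r2 s a + \<gamma> * next_exp Ms p s a V2"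
    using Q2 unfolding optimal_soft_Q_def V2_def by blast
  have eQC: "\<And>s a. s\<in>space Ms \<Longrightarrow> a\<in>space Ma \<Longrightarrow> QC s a = (r1 s a + r2 s a) / 2 + \<gamma> * next_exp Ms p s a VC"
    using QC unfolding optimal_soft_Q_def VC_def by blast
  have eC: "\<And>s a. s\<in>space Ms \<Longrightarrow> a\<in>space Ma \<Longrightarrow> C s a = \<gamma> * next_exp Ms p s a (\<lambda>s'. Dv s' + SC s')"
    using C unfolding C_fixed_def Dv_def SC_def by blast
  have eD: "\<And>s a. s\<in>space Ms \<Longrightarrow> a\<in>space Ma \<Longrightarrow>
      D s a = \<gamma> * next_exp Ms p s a (\<lambda>s'. \<integral>a'. \<pi> s' a' * (C s' a' + D s' a') \<partial>Ma)"
    using D unfolding D_fixed_def \<pi>_def QS_def by blast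
  have eQ\<pi>: "\<And>s a. s\<in>space Ms \<Longrightarrow> a\<in>space Ma \<Longrightarrow>
      Q\<pi> s a = (r1 s a + r2 s a) / 2 + \<gamma> * next_exp Ms p s a (\<lambda>s'. \<integral>a'. \<pi> s' a' * (Q\<pi> s' a' - ln (\<pi> s' a')) \<partial>Ma)"
    using Q\<pi> unfolding policy_soft_Q_def \<pi>_def QS_def by blast
  have SCm: "SC \<in> borel_measurable Ms" using C unfolding C_fixed_def SC_def by blast
  obtain BC where "0 \<le> BC" and BC: "\<And>s a. s\<in>space Ms \<Longrightarrow> a\<in>space Ma \<Longrightarrow> \<bar>C s a\<bar> \<le> BC"
    using bm_bound[OF bC] by metis
  have bddC: "bdd_above (C s ` space Ma)" if "s\<in>space Ms" for s
    by (rule bdd_aboveI[of _ BC]) (use BC[OF that] abs_hi in blast)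
  have SCge: "C s a \<le> SC s" if "s\<in>space Ms" "a\<in>space Ma" for s a
    unfolding SC_def by (rule cSUP_upper[OF that(2) bddC[OF that(1)]])
  have SCle: "SC s \<le> BC" if "s\<in>space Ms" for s
    unfolding SC_def by (rule cSUP_least[OF Ma_ne]) (use BC[OF that] abs_hi in blast)
  have gSC: "good SC" unfolding good_def
  proof (intro conjI exI ballI)
    show "SC \<in> borel_measurable Ms" by (rule SCm)
    fix x assume x: "x \<in> space Ms"
    obtain a0 where a0: "a0 \<in> space Ma" using Ma_ne by blast
    have "-BC \<le> C x a0" using BC[OF x a0] abs_lo by blast
    then show "\<bar>SC x\<bar> \<le> BC" using SCge[OF x a0] SCle[OF x] by linarith
  qed
  have gV1: "good V1" unfolding V1_def by (rule V_good[OF bQ1])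
  have gV2: "good V2" unfolding V2_def by (rule V_good[OF bQ2])
  have gVS: "good VS" unfolding VS_def by (rule V_good[OF bQS])
  have gVC: "good VC" unfolding VC_def by (rule V_good[OF bQC])
  have hol: "2 * VS s \<le> V1 s + V2 s" if "s\<in>space Ms" for s
    unfolding VS_def V1_def V2_def QS_def by (rule holder[OF bQ1 bQ2 that])
  have Dveq: "Dv s = V1 s + V2 s - 2 * VS s" if "s\<in>space Ms" for s
    unfolding Dv_def V1_def V2_def VS_def QS_def by (rule renyi_eq[OF bQ1 bQ2 that])
  have gDSC: "good (\<lambda>s'. Dv s' + SC s')"
  proof (rule good_cong)
    show "good (\<lambda>s'. ((V1 s' + V2 s') - 2 * VS s') + SC s')"
      by (intro good_add good_diff good_cmult gV1 gV2 gVS gSC)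
  qed (simp add: Dveq)
  have gV12: "good (\<lambda>x. (V1 x + V2 x) / 2)" by (intro good_div good_add gV1 gV2)

  have bA: "bounded_measurable_SA Ms Ma (\<lambda>s a. QS s a - QC s a)" by (rule bm_diff[OF bQS bQC])
  obtain BA where "0 \<le> BA" and BA: "\<And>s a. s\<in>space Ms \<Longrightarrow> a\<in>space Ma \<Longrightarrow> \<bar>QS s a - QC s a\<bar> \<le> BA"
    using bm_bound[OF bA] by metis
  have partA: "\<forall>s\<in>space Ms. \<forall>a\<in>space Ma. 0 \<le> QS s a - QC s a"
  proof (rule inf_arg[of _ BA])
    show "\<forall>s\<in>space Ms. \<forall>a\<in>space Ma. \<bar>QS s a - QC s a\<bar> \<le> BA" using BA by blast
  next
    fix m assume hm: "\<forall>s\<in>space Ms. \<forall>a\<in>space Ma. m \<le> QS s a - QC s a"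
    show "\<forall>s\<in>space Ms. \<forall>a\<in>space Ma. \<gamma> * m \<le> QS s a - QC s a"
    proof (intro ballI)
      fix s a assume s: "s\<in>space Ms" and a: "a\<in>space Ma"
      have eq: "QS s a - QC s a = \<gamma> * next_exp Ms p s a (\<lambda>x. (V1 x + V2 x) / 2 - VC x)"
        unfolding ne_diff[OF gV12 gVC s a] ne_div ne_add[OF gV1 gV2 s a]
        using eQ1[OF s a] eQ2[OF s a] eQC[OF s a] unfolding QS_def by (simp add: algebra_simps)
      have "m \<le> next_exp Ms p s a (\<lambda>x. (V1 x + V2 x) / 2 - VC x)"
      proof (rule good_ge[OF good_diff[OF gV12 gVC] s a])
        fix x assume x: "x \<in> space Ms"
        have "VC x + m \<le> VS x" unfolding VC_def VS_def
          by (rule lse_mono[OF bQC bQS x]) (use hm x in \<open>auto simp: algebra_simps\<close>)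
        moreover have "VS x \<le> (V1 x + V2 x) / 2" using hol[OF x] by (simp add: field_simps)
        ultimately show "m \<le> (V1 x + V2 x) / 2 - VC x" by (simp add: algebra_simps)
      qed
      then show "\<gamma> * m \<le> QS s a - QC s a" unfolding eq using g0 by (simp add: mult_left_mono)
    qed
  qed

  have bB: "bounded_measurable_SA Ms Ma (\<lambda>s a. (QC s a - QS s a) + C s a)" by (rule bm_add[OF bm_diff[OF bQC bQS] bC])
  obtain BB where "0 \<le> BB" and BB: "\<And>s a. s\<in>space Ms \<Longrightarrow> a\<in>space Ma \<Longrightarrow> \<bar>(QC s a - QS s a) + C s a\<bar> \<le> BB"
    using bm_bound[OF bB] by metis
  have partB: "\<forall>s\<in>space Ms. \<forall>a\<in>space Ma. 0 \<le> (QC s a - QS s a) + C s a"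
  proof (rule inf_arg[of _ BB])
    show "\<forall>s\<in>space Ms. \<forall>a\<in>space Ma. \<bar>(QC s a - QS s a) + C s a\<bar> \<le> BB" using BB by blast
  next
    fix m assume hm: "\<forall>s\<in>space Ms. \<forall>a\<in>space Ma. m \<le> (QC s a - QS s a) + C s a"
    show "\<forall>s\<in>space Ms. \<forall>a\<in>space Ma. \<gamma> * m \<le> (QC s a - QS s a) + C s a"
    proof (intro ballI)
      fix s a assume s: "s\<in>space Ms" and a: "a\<in>space Ma"
      have eq: "(QC s a - QS s a) + C s a = \<gamma> * next_exp Ms p s a (\<lambda>x. (VC x - (V1 x + V2 x) / 2) + (Dv x + SC x))"
        unfolding ne_add[OF good_diff[OF gVC gV12] gDSC s a] ne_diff[OF gVC gV12 s a] ne_div ne_add[OF gV1 gV2 s a]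
        using eQ1[OF s a] eQ2[OF s a] eQC[OF s a] eC[OF s a] unfolding QS_def by (simp add: field_simps)
      have "m \<le> next_exp Ms p s a (\<lambda>x. (VC x - (V1 x + V2 x) / 2) + (Dv x + SC x))"
      proof (rule good_ge[OF good_add[OF good_diff[OF gVC gV12] gDSC] s a])
        fix x assume x: "x \<in> space Ms"
        have "VS x + (m - SC x) \<le> VC x" unfolding VC_def VS_def
        proof (rule lse_mono[OF bQS bQC x])
          fix a' assume a': "a' \<in> space Ma"
          show "QS x a' + (m - SC x) \<le> QC x a'" using hm x a' SCge[OF x a'] by fastforce
        qed
        then have h2: "m \<le> VC x - VS x + SC x" by linarith
        have h1: "VS x \<le> (V1 x + V2 x) / 2" using hol[OF x] by (simp add: field_simps)
        show "m \<le> (VC x - (V1 x + V2 x) / 2) + (Dv x + SC x)" unfolding Dveq[OF x] using h1 h2 by (simp add: field_simps)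
      qed
      then show "\<gamma> * m \<le> (QC s a - QS s a) + C s a" unfolding eq using g0 by (simp add: mult_left_mono)
    qed
  qed

  have bh: "bounded_measurable_SA Ms Ma (\<lambda>s a. (Q\<pi> s a - QS s a) + (C s a + D s a))"
    by (rule bm_add[OF bm_diff[OF bQ\<pi> bQS] bm_add[OF bC bD]])
  have bCD: "bounded_measurable_SA Ms Ma (\<lambda>s a. C s a + D s a)" by (rule bm_add[OF bC bD])
  have bPS: "bounded_measurable_SA Ms Ma (\<lambda>s a. Q\<pi> s a - QS s a)" by (rule bm_diff[OF bQ\<pi> bQS])
  have gW2: "good (\<lambda>s'. \<integral>a'. \<pi> s' a' * (C s' a' + D s' a') \<partial>Ma)"
    unfolding \<pi>_def by (rule pav_good[OF bQS bCD])
  have W1eq: "(\<integral>a'. \<pi> x a' * (Q\<pi> x a' - ln (\<pi> x a')) \<partial>Ma) = (\<integral>a'. \<pi> x a' * (Q\<pi> x a' - QS x a') \<partial>Ma) + VS x"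
    if x: "x \<in> space Ms" for x
  proof -
    obtain B where "0 \<le> B" and B: "\<And>s a. s\<in>space Ms \<Longrightarrow> a\<in>space Ma \<Longrightarrow> \<bar>Q\<pi> s a - QS s a\<bar> \<le> B"
      using bm_bound[OF bPS] by metis
    have "(\<integral>a'. \<pi> x a' * (Q\<pi> x a' - ln (\<pi> x a')) \<partial>Ma) = (\<integral>a'. \<pi> x a' * (Q\<pi> x a' - QS x a') + VS x * \<pi> x a' \<partial>Ma)"
      unfolding \<pi>_def VS_def ln_policy[OF bQS x] by (simp add: algebra_simps)
    also have "\<dots> = (\<integral>a'. \<pi> x a' * (Q\<pi> x a' - QS x a') \<partial>Ma) + (\<integral>a'. VS x * \<pi> x a' \<partial>Ma)"
    proof (rule Bochner_Integration.integral_add)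
      show "integrable Ma (\<lambda>a'. \<pi> x a' * (Q\<pi> x a' - QS x a'))"
        unfolding \<pi>_def by (rule pav_int[OF bQS x bm_sec[OF bPS x] B[OF x]])
      have "integrable Ma (\<lambda>a'. \<pi> x a' * 1)"
        unfolding \<pi>_def by (rule pav_int[OF bQS x, of _ 1]) auto
      then show "integrable Ma (\<lambda>a'. VS x * \<pi> x a')" by simp
    qed
    also have "(\<integral>a'. VS x * \<pi> x a' \<partial>Ma) = VS x" unfolding \<pi>_def using pav_one[OF bQS x] by simp
    finally show ?thesis .
  qed
  have gW1: "good (\<lambda>s'. \<integral>a'. \<pi> s' a' * (Q\<pi> s' a' - ln (\<pi> s' a')) \<partial>Ma)"
  proof (rule good_cong)
    show "good (\<lambda>s'. (\<integral>a'. \<pi> s' a' * (Q\<pi> s' a' - QS s' a') \<partial>Ma) + VS s')"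
      unfolding \<pi>_def by (intro good_add pav_good[OF bQS bPS] gVS)
  qed (simp add: W1eq)
  define W1 where "W1 = (\<lambda>s'. \<integral>a'. \<pi> s' a' * (Q\<pi> s' a' - ln (\<pi> s' a')) \<partial>Ma)"
  define W2 where "W2 = (\<lambda>s'. \<integral>a'. \<pi> s' a' * (C s' a' + D s' a') \<partial>Ma)"
  have gW1': "good W1" unfolding W1_def by (rule gW1)
  have gW2': "good W2" unfolding W2_def by (rule gW2)
  have bF: "bounded_measurable_SA Ms Ma (\<lambda>s a. (Q\<pi> s a - QC s a) + D s a)" by (rule bm_add[OF bm_diff[OF bQ\<pi> bQC] bD])
  obtain BF where "0 \<le> BF" and BF: "\<And>s a. s\<in>space Ms \<Longrightarrow> a\<in>space Ma \<Longrightarrow> \<bar>(Q\<pi> s a - QC s a) + D s a\<bar> \<le> BF"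
    using bm_bound[OF bF] by metis
  have partC: "\<forall>s\<in>space Ms. \<forall>a\<in>space Ma. 0 \<le> (Q\<pi> s a - QC s a) + D s a"
  proof (rule inf_arg[of _ BF])
    show "\<forall>s\<in>space Ms. \<forall>a\<in>space Ma. \<bar>(Q\<pi> s a - QC s a) + D s a\<bar> \<le> BF" using BF by blast
  next
    fix m assume hm: "\<forall>s\<in>space Ms. \<forall>a\<in>space Ma. m \<le> (Q\<pi> s a - QC s a) + D s a"
    show "\<forall>s\<in>space Ms. \<forall>a\<in>space Ma. \<gamma> * m \<le> (Q\<pi> s a - QC s a) + D s a"
    proof (intro ballI)
      fix s a assume s: "s\<in>space Ms" and a: "a\<in>space Ma"
      have eq: "(Q\<pi> s a - QC s a) + D s a = \<gamma> * next_exp Ms p s a (\<lambda>x. (W1 x - VC x) + W2 x)"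
        unfolding ne_add[OF good_diff[OF gW1' gVC] gW2' s a] ne_diff[OF gW1' gVC s a]
        using eQ\<pi>[OF s a] eQC[OF s a] eD[OF s a] unfolding W1_def W2_def by (simp add: algebra_simps)
      have "m \<le> next_exp Ms p s a (\<lambda>x. (W1 x - VC x) + W2 x)"
      proof (rule good_ge[OF good_add[OF good_diff[OF gW1' gVC] gW2'] s a])
        fix x assume x: "x \<in> space Ms"
        obtain B where "0 \<le> B" and B: "\<And>s a. s\<in>space Ms \<Longrightarrow> a\<in>space Ma \<Longrightarrow> \<bar>(Q\<pi> s a - QS s a) + (C s a + D s a)\<bar> \<le> B"
          using bm_bound[OF bh] by metis
        obtain B1 where "0 \<le> B1" and B1: "\<And>s a. s\<in>space Ms \<Longrightarrow> a\<in>space Ma \<Longrightarrow> \<bar>Q\<pi> s a - QS s a\<bar> \<le> B1"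
          using bm_bound[OF bPS] by metis
        obtain B2 where "0 \<le> B2" and B2: "\<And>s a. s\<in>space Ms \<Longrightarrow> a\<in>space Ma \<Longrightarrow> \<bar>C s a + D s a\<bar> \<le> B2"
          using bm_bound[OF bCD] by metis
        have sum: "(\<integral>a'. \<pi> x a' * (Q\<pi> x a' - QS x a') \<partial>Ma) + W2 x =
            (\<integral>a'. \<pi> x a' * ((Q\<pi> x a' - QS x a') + (C x a' + D x a')) \<partial>Ma)"
        proof -
          have i1: "integrable Ma (\<lambda>a'. \<pi> x a' * (Q\<pi> x a' - QS x a'))"
            unfolding \<pi>_def by (rule pav_int[OF bQS x bm_sec[OF bPS x] B1[OF x]])
          have i2: "integrable Ma (\<lambda>a'. \<pi> x a' * (C x a' + D x a'))"
            unfolding \<pi>_def by (rule pav_int[OF bQS x bm_sec[OF bCD x] B2[OF x]])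
          have "(\<integral>a'. \<pi> x a' * (Q\<pi> x a' - QS x a') \<partial>Ma) + W2 x =
             (\<integral>a'. \<pi> x a' * (Q\<pi> x a' - QS x a') + \<pi> x a' * (C x a' + D x a') \<partial>Ma)"
            unfolding W2_def by (rule Bochner_Integration.integral_add[OF i1 i2, symmetric])
          also have "\<dots> = (\<integral>a'. \<pi> x a' * ((Q\<pi> x a' - QS x a') + (C x a' + D x a')) \<partial>Ma)"
            by (simp only: distrib_left)
          finally show ?thesis .
        qed
        have ge: "m \<le> (\<integral>a'. \<pi> x a' * ((Q\<pi> x a' - QS x a') + (C x a' + D x a')) \<partial>Ma)"
          unfolding \<pi>_def
        proof (rule pav_ge[OF bQS x bm_sec[OF bh x] B[OF x]])
          fix a' assume a': "a' \<in> space Ma"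
          have "m \<le> (Q\<pi> x a' - QC x a') + D x a'" using hm x a' by blast
          moreover have "0 \<le> (QC x a' - QS x a') + C x a'" using partB x a' by blast
          ultimately show "m \<le> (Q\<pi> x a' - QS x a') + (C x a' + D x a')" by linarith
        qed
        have "VC x + 0 \<le> VS x" unfolding VC_def VS_def
          by (rule lse_mono[OF bQC bQS x]) (use partA x in auto)
        then show "m \<le> (W1 x - VC x) + W2 x"
          using ge sum W1eq[OF x] unfolding W1_def by linarith
      qed
      then show "\<gamma> * m \<le> (Q\<pi> s a - QC s a) + D s a" unfolding eq using g0 by (simp add: mult_left_mono)
    qed
  qed
  show ?thesis using partC by fastforce
qed

end

theorem theorem1:
  fixes Ms :: "'s measure" and Ma :: "'a measure"
    and p :: "'s \<Rightarrow> 'a \<Rightarrow> 's \<Rightarrow> real" and \<gamma> :: real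
    and r1 r2 Q1 Q2 QC C D Q\<pi> :: "'s \<Rightarrow> 'a \<Rightarrow> real"
  assumes mdp: "soft_mdp Ms Ma p \<gamma>"
    and r1: "bounded_measurable_SA Ms Ma r1"
    and r2: "bounded_measurable_SA Ms Ma r2"
    and Q1: "optimal_soft_Q Ms Ma p \<gamma> r1 Q1"
    and Q2: "optimal_soft_Q Ms Ma p \<gamma> r2 Q2"
    and QC: "optimal_soft_Q Ms Ma p \<gamma> (\<lambda>s a. (r1 s a + r2 s a) / 2) QC"
    and C: "C_fixed Ms Ma p \<gamma> Q1 Q2 C"
    and D: "D_fixed Ms Ma p \<gamma> (soft_policy Ma (\<lambda>s a. (Q1 s a + Q2 s a) / 2)) C D"
    and Q\<pi>: "policy_soft_Q Ms Ma p \<gamma> (\<lambda>s a. (r1 s a + r2 s a) / 2)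
               (soft_policy Ma (\<lambda>s a. (Q1 s a + Q2 s a) / 2)) Q\<pi>"
    and s: "s \<in> space Ms" and a: "a \<in> space Ma"
  shows "Q\<pi> s a \<ge> QC s a - D s a"
proof -
  interpret M: mdp Ms Ma p \<gamma> by (rule mdp.intro[OF mdp])
  have "\<forall>s\<in>space Ms. \<forall>a\<in>space Ma. QC s a - D s a \<le> Q\<pi> s a"
    by (rule M.main[OF r1 r2 Q1 Q2 QC C D Q\<pi>])
  then show ?thesis using s a by blast
qed

end
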